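(* Let $n\ge2$ and $q\ge1$ be integers and $\beta>0$, $J>0$, $H\in\mathbb{R}$. For $\pi\in S_3$ let $\mathrm{CDdes}(\pi)=\mathrm{des}(\pi)+\mathrm{des}(\pi^{-1})$, where $\mathrm{des}(\pi)$ is the number of $i\in\{1,2\}$ with $\pi(i)>\pi(i+1)$, and put $\phi(\alpha,\sigma)=1-\tfrac12\mathrm{CDdes}(\alpha^{-1}\sigma)$. For $\vec\pi=(\pi^{(1)},\ldots,\pi^{(n)})\in S_3^n$ define the mean-field Hamiltonian $$\mathcal{H}^{(mean)}(\vec\pi)=-\frac{qJ}{n-1}\sum_{1\le i<j\le n}\phi(\pi^{(i)},\pi^{(j)})-H\sum_{i=1}^n\phi(\pi^{(i)},\mathrm{id}),$$ and $Z_n(\beta)=\sum_{\vec\pi\in S_3^n}\exp(-\beta\mathcal{H}^{(mean)}(\vec\pi))$. Then $$Z_n(\beta)=e^{-\frac{\beta}{2}\left(\frac{nqJ}{n-1}+\frac{H^2(n-1)}{qJ}\right)}\sum_{a+b+c=n}\binom{n}{a,b,c}\,G_a\!\left(\tfrac{H(n-1)}{qJ};e^{\frac{\beta qJ}{2(n-1)}}\right)G_b\!\left(0;e^{\frac{\beta qJ}{2(n-1)}}\right)G_c\!\left(0;e^{\frac{\beta qJ}{2(n-1)}}\right),$$ where the sum is over nonnegative integers $a,b,c$ and $$G_m(\ell;x):=\sum_{i+j=m}\binom{m}{i}x^{(i-j+\ell)^2}=\sum_{i=0}^{m}\binom{m}{i}x^{(2i-m+\ell)^2}.$$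
   Context: Permutations of $\{1,2,3\}$ are composed as functions, $(\alpha^{-1}\sigma)(x)=\alpha^{-1}(\sigma(x))$; $\mathrm{id}=123$. $\binom{n}{a,b,c}$ denotes the multinomial coefficient. *)

theory Defs
  imports "HOL-Combinatorics.Combinatorics" Complex_Main
begin

definition S3 :: "(nat \<Rightarrow> nat) set" where
  "S3 = {p. p permutes {1,2,3}}"

definition des :: "(nat \<Rightarrow> nat) \<Rightarrow> nat" where
  "des p = card {i \<in> {1,2}. p i > p (Suc i)}"

definition CDdes :: "(nat \<Rightarrow> nat) \<Rightarrow> nat" where
  "CDdes p = des p + des (inv p)"

definition phi :: "(nat \<Rightarrow> nat) \<Rightarrow> (nat \<Rightarrow> nat) \<Rightarrow> real" where
  "phi \<alpha> \<sigma> = 1 - real (CDdes (inv \<alpha> \<circ> \<sigma>)) / 2"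

definition H_mean :: "nat \<Rightarrow> nat \<Rightarrow> real \<Rightarrow> real \<Rightarrow> (nat \<Rightarrow> nat \<Rightarrow> nat) \<Rightarrow> real" where
  "H_mean n q J H P =
     - (real q * J / (real n - 1)) * (\<Sum>(i,j) \<in> {(i,j). 1 \<le> i \<and> i < j \<and> j \<le> n}. phi (P i) (P j))
     - H * (\<Sum>i=1..n. phi (P i) id)"

definition Z :: "nat \<Rightarrow> nat \<Rightarrow> real \<Rightarrow> real \<Rightarrow> real \<Rightarrow> real" where
  "Z n q J H \<beta> = (\<Sum>P \<in> PiE {1..n} (\<lambda>_. S3). exp (- \<beta> * H_mean n q J H P))"

definition multinom3 :: "nat \<Rightarrow> nat \<Rightarrow> nat \<Rightarrow> nat \<Rightarrow> real" where
  "multinom3 n a b c = fact n / (fact a * fact b * fact c)"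

definition G :: "nat \<Rightarrow> real \<Rightarrow> real \<Rightarrow> real" where
  "G m l x = (\<Sum>i=0..m. real (m choose i) * x powr ((2 * real i - real m + l)^2))"

end

theory Submission
  imports Defs
begin


definition pm :: "nat \<Rightarrow> nat \<Rightarrow> nat \<Rightarrow> nat \<Rightarrow> nat" where
  "pm a b c x = (if x = 1 then a else if x = 2 then b else if x = 3 then c else x)"

lemma pm_eq_iff: "pm a b c = pm a' b' c' \<longleftrightarrow> a = a' \<and> b = b' \<and> c = c'"
proof
  assume h: "pm a b c = pm a' b' c'"
  from fun_cong[OF h, of 1] fun_cong[OF h, of 2] fun_cong[OF h, of 3]
  show "a = a' \<and> b = b' \<and> c = c'" by (simp add: pm_def)
qed simp

lemma pm_comp: "pm a b c \<circ> pm a' b' c' = pm (pm a b c a') (pm a b c b') (pm a b c c')"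
  if "a' \<in> {1,2,3}" "b' \<in> {1,2,3}" "c' \<in> {1,2,3}"
  using that by (auto simp: fun_eq_iff pm_def)

lemma pm_id: "pm 1 2 3 = id" by (auto simp: fun_eq_iff pm_def)

lemma inv_pm:
  "inv (pm 1 2 3) = pm 1 2 3" "inv (pm 1 3 2) = pm 1 3 2" "inv (pm 2 1 3) = pm 2 1 3"
  "inv (pm 2 3 1) = pm 3 1 2" "inv (pm 3 1 2) = pm 2 3 1" "inv (pm 3 2 1) = pm 3 2 1"
  by (rule inv_unique_comp; auto simp: fun_eq_iff pm_def)+

lemma pm_permutes:
  assumes "a \<in> {1,2,3}" "b \<in> {1,2,3}" "c \<in> {1,2,3}" "a \<noteq> b" "a \<noteq> c" "b \<noteq> c"
  shows "pm a b c permutes {1,2,3}"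
proof (rule bij_imp_permutes)
  have "inj_on (pm a b c) {1,2,3}" using assms by (auto simp: inj_on_def pm_def)
  moreover have "pm a b c ` {1,2,3} = {1,2,3}" using assms by (auto simp: pm_def)
  ultimately show "bij_betw (pm a b c) {1,2,3} {1,2,3}" by (simp add: bij_betw_def)
next
  fix x :: nat assume "x \<notin> {1,2,3}"
  thus "pm a b c x = x" by (simp add: pm_def)
qed

lemma bij_S3: "p \<in> S3 \<Longrightarrow> bij p"
  unfolding S3_def using permutes_bij by blast

lemma pm_in6:
  assumes "x \<in> {1,2,3}" "y \<in> {1,2,3}" "z \<in> {1,2,3}" "x \<noteq> y" "x \<noteq> z" "y \<noteq> z"
  shows "pm x y z \<in> {pm 1 2 3, pm 1 3 2, pm 2 1 3, pm 2 3 1, pm 3 1 2, pm 3 2 1}"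
  using assms unfolding insert_iff empty_iff pm_eq_iff by (elim disjE) simp_all

lemma S3_eq: "S3 = {pm 1 2 3, pm 1 3 2, pm 2 1 3, pm 2 3 1, pm 3 1 2, pm 3 2 1}"
proof (intro equalityI subsetI)
  fix p assume "p \<in> S3"
  hence p: "p permutes {1,2,3}" by (simp add: S3_def)
  have out: "p x = x" if "x \<notin> {1,2,3}" for x using p that by (simp add: permutes_def)
  have im: "p x \<in> {1,2,3}" if "x \<in> {1,2,3}" for x using permutes_in_image[OF p] that by simp
  have inj: "inj p" using p permutes_inj by blast
  have eq: "p = pm (p 1) (p 2) (p 3)"
    by (auto simp: fun_eq_iff pm_def out)
  have d: "p 1 \<noteq> p 2" "p 1 \<noteq> p 3" "p 2 \<noteq> p 3"
    using inj_eq[OF inj] by simp_all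
  have "p 1 \<in> {1,2,3}" "p 2 \<in> {1,2,3}" "p 3 \<in> {1,2,3}" using im by auto
  with d show "p \<in> {pm 1 2 3, pm 1 3 2, pm 2 1 3, pm 2 3 1, pm 3 1 2, pm 3 2 1}"
    using pm_in6[of "p 1" "p 2" "p 3"] eq by simp
next
  fix p assume "p \<in> {pm 1 2 3, pm 1 3 2, pm 2 1 3, pm 2 3 1, pm 3 1 2, pm 3 2 1}"
  moreover have "pm 1 2 3 permutes {1,2,3}" "pm 1 3 2 permutes {1,2,3}" "pm 2 1 3 permutes {1,2,3}"
    "pm 2 3 1 permutes {1,2,3}" "pm 3 1 2 permutes {1,2,3}" "pm 3 2 1 permutes {1,2,3}"
    by (rule pm_permutes; simp)+
  ultimately show "p \<in> S3" unfolding S3_def mem_Collect_eq by blast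
qed

lemma des_eq: "des p = (if p 2 < p 1 then 1 else 0) + (if p 3 < p 2 then 1 else 0)"
proof -
  have "{i \<in> {1,2}. p i > p (Suc i)} = (if p 2 < p 1 then {1} else {}) \<union> (if p 3 < p 2 then {2} else {})"
    by (auto simp: numeral_2_eq_2 numeral_3_eq_3)
  thus ?thesis unfolding des_def by auto
qed

definition sg :: "(nat \<Rightarrow> nat) \<Rightarrow> int" where "sg p = (if p 1 < p 3 then 1 else -1)"
definition u0 :: "(nat \<Rightarrow> nat) \<Rightarrow> int" where "u0 p = (if p 2 = 2 then sg p else 0)"
definition u1 :: "(nat \<Rightarrow> nat) \<Rightarrow> int" where "u1 p = (if p 2 = 3 then sg p else 0)"
definition u2 :: "(nat \<Rightarrow> nat) \<Rightarrow> int" where "u2 p = (if p 2 = 1 then sg p else 0)"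

lemma phi_alt: "\<alpha> \<in> S3 \<Longrightarrow> \<sigma> \<in> S3 \<Longrightarrow>
  phi \<alpha> \<sigma> = 1 - (real (des (inv \<alpha> \<circ> \<sigma>)) + real (des (inv \<sigma> \<circ> \<alpha>))) / 2"
  unfolding phi_def CDdes_def
  by (simp add: o_inv_distrib bij_S3 bij_imp_bij_inv inv_inv_eq)

lemma phi_S3: "\<alpha> \<in> S3 \<Longrightarrow> \<sigma> \<in> S3 \<Longrightarrow>
  phi \<alpha> \<sigma> = of_int (u0 \<alpha> * u0 \<sigma> + u1 \<alpha> * u1 \<sigma> + u2 \<alpha> * u2 \<sigma>)"
  apply (simp only: phi_alt)
  unfolding S3_eq insert_iff empty_iff
  by (elim disjE FalseE; hypsubst; simp only: inv_pm des_eq comp_apply;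
      simp add: pm_def u0_def u1_def u2_def sg_def)

lemma u_sq: "\<alpha> \<in> S3 \<Longrightarrow> (u0 \<alpha>)^2 + (u1 \<alpha>)^2 + (u2 \<alpha>)^2 = 1"
  unfolding S3_eq insert_iff empty_iff
  by (elim disjE FalseE; hypsubst; simp add: pm_def u0_def u1_def u2_def sg_def)

lemma u_id: "\<alpha> \<in> S3 \<Longrightarrow> phi \<alpha> id = of_int (u0 \<alpha>)"
proof -
  assume a: "\<alpha> \<in> S3"
  have "id \<in> S3" unfolding S3_def by (simp add: permutes_id)
  with a show ?thesis
    by (simp add: phi_S3) (simp add: u0_def u1_def u2_def sg_def)
qed



definition gg :: "(int \<Rightarrow> real) \<Rightarrow> nat \<Rightarrow> real" where
  "gg f m = (\<Sum>i\<le>m. real (m choose i) * f (int i - int (m - i)))"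

definition DD :: "nat \<Rightarrow> (nat \<Rightarrow> nat \<Rightarrow> nat \<Rightarrow> real) \<Rightarrow> real" where
  "DD n h = (\<Sum>a\<le>n. real (n choose a) * (\<Sum>b\<le>n-a. real ((n-a) choose b) * h a b (n-a-b)))"

lemma pascal2:
  "(\<Sum>b\<le>Suc m. real (Suc m choose b) * k b (Suc m - b)) =
   (\<Sum>b\<le>m. real (m choose b) * (k (Suc b) (m - b) + k b (Suc (m - b))))"
proof -
  have A: "(\<Sum>b\<le>Suc m. real (Suc m choose b) * k b (Suc m - b)) =
        k 0 (Suc m) + (\<Sum>b\<le>m. real (m choose b) * k (Suc b) (m - b))
                    + (\<Sum>b\<le>m. real (m choose Suc b) * k (Suc b) (m - b))"
    by (subst sum.atMost_Suc_shift) (simp add: sum.distrib distrib_right)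
  have B: "(\<Sum>b\<le>Suc m. real (m choose b) * k b (Suc m - b)) =
        k 0 (Suc m) + (\<Sum>b\<le>m. real (m choose Suc b) * k (Suc b) (m - b))"
    by (subst sum.atMost_Suc_shift) simp
  have C: "(\<Sum>b\<le>Suc m. real (m choose b) * k b (Suc m - b)) =
        (\<Sum>b\<le>m. real (m choose b) * k b (Suc (m - b)))"
    by (simp add: sum.atMost_Suc Suc_diff_le)
  show ?thesis using A B C by (simp add: distrib_left sum.distrib)
qed

lemma DD_add: "DD n (\<lambda>a b c. h1 a b c + h2 a b c) = DD n h1 + DD n h2"
  by (simp add: DD_def sum.distrib distrib_left)

lemma DD_Suc: "DD (Suc n) h = DD n (\<lambda>a b c. h (Suc a) b c + h a (Suc b) c + h a b (Suc c))"
proof -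
  define \<phi> where "\<phi> a m = (\<Sum>b\<le>m. real (m choose b) * h a b (m - b))" for a m
  have D: "DD k h = (\<Sum>a\<le>k. real (k choose a) * \<phi> a (k - a))" for k
    by (simp add: DD_def \<phi>_def)
  have \<phi>S: "\<phi> a (Suc m) = (\<Sum>b\<le>m. real (m choose b) * (h a (Suc b) (m - b) + h a b (Suc (m - b))))" for a m
    unfolding \<phi>_def by (rule pascal2)
  have "DD (Suc n) h = (\<Sum>a\<le>n. real (n choose a) * (\<phi> (Suc a) (n - a) + \<phi> a (Suc (n - a))))"
    unfolding D by (rule pascal2)
  also have "\<dots> = DD n (\<lambda>a b c. h (Suc a) b c + h a (Suc b) c + h a b (Suc c))"
    unfolding DD_def \<phi>S
    by (simp add: \<phi>_def distrib_left sum.distrib add.assoc)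
  finally show ?thesis .
qed

lemma gg_Suc: "gg f (Suc m) = gg (\<lambda>x. f (x + 1)) m + gg (\<lambda>x. f (x - 1)) m"
proof -
  have "gg f (Suc m) = (\<Sum>b\<le>m. real (m choose b) * (f (int (Suc b) - int (m - b)) + f (int b - int (Suc (m - b)))))"
    unfolding gg_def by (rule pascal2[where k="\<lambda>i j. f (int i - int j)"])
  also have "\<dots> = gg (\<lambda>x. f (x + 1)) m + gg (\<lambda>x. f (x - 1)) m"
    unfolding gg_def by (simp add: sum.distrib distrib_left algebra_simps)
  finally show ?thesis .
qed

lemma gg_0: "gg f 0 = f 0" by (simp add: gg_def)

fun WW :: "nat \<Rightarrow> (int \<Rightarrow> int \<Rightarrow> int \<Rightarrow> real) \<Rightarrow> real" where
  "WW 0 F = F 0 0 0"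
| "WW (Suc n) F = (\<Sum>s\<in>S3. WW n (\<lambda>x y z. F (x + u0 s) (y + u1 s) (z + u2 s)))"

lemma WW_PiE:
  assumes "finite I"
  shows "(\<Sum>P\<in>PiE I (\<lambda>_. S3). F (\<Sum>i\<in>I. u0 (P i)) (\<Sum>i\<in>I. u1 (P i)) (\<Sum>i\<in>I. u2 (P i)))
         = WW (card I) F"
  using assms
proof (induction I arbitrary: F rule: finite_induct)
  case empty
  then show ?case by (simp add: PiE_empty_domain)
next
  case (insert a I)
  have eq: "(\<Sum>i\<in>insert a I. u (((g(a := y)) i))) = (\<Sum>i\<in>I. u (g i)) + u y" for u :: "_ \<Rightarrow> int" and g y
  proof -
    have "(\<Sum>i\<in>I. u (((g(a := y)) i))) = (\<Sum>i\<in>I. u (g i))"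
      by (rule sum.cong) (use insert.hyps in auto)
    thus ?thesis using insert.hyps by simp
  qed
  have "(\<Sum>P\<in>PiE (insert a I) (\<lambda>_. S3). F (\<Sum>i\<in>insert a I. u0 (P i)) (\<Sum>i\<in>insert a I. u1 (P i)) (\<Sum>i\<in>insert a I. u2 (P i)))
      = (\<Sum>(y,g)\<in>S3 \<times> PiE I (\<lambda>_. S3). F (\<Sum>i\<in>insert a I. u0 ((g(a:=y)) i)) (\<Sum>i\<in>insert a I. u1 ((g(a:=y)) i)) (\<Sum>i\<in>insert a I. u2 ((g(a:=y)) i)))"
    unfolding PiE_insert_eq
    by (subst sum.reindex[OF inj_combinator[OF insert.hyps(2)]]) (simp add: case_prod_unfold)
  also have "\<dots> = (\<Sum>y\<in>S3. \<Sum>g\<in>PiE I (\<lambda>_. S3). F ((\<Sum>i\<in>I. u0 (g i)) + u0 y) ((\<Sum>i\<in>I. u1 (g i)) + u1 y) ((\<Sum>i\<in>I. u2 (g i)) + u2 y))"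
    by (simp only: eq sum.cartesian_product)
  also have "\<dots> = (\<Sum>y\<in>S3. WW (card I) (\<lambda>x xa z. F (x + u0 y) (xa + u1 y) (z + u2 y)))"
  proof (rule sum.cong[OF refl])
    fix y show "(\<Sum>g\<in>PiE I (\<lambda>_. S3). F ((\<Sum>i\<in>I. u0 (g i)) + u0 y) ((\<Sum>i\<in>I. u1 (g i)) + u1 y) ((\<Sum>i\<in>I. u2 (g i)) + u2 y))
      = WW (card I) (\<lambda>x xa z. F (x + u0 y) (xa + u1 y) (z + u2 y))"
      using insert.IH[of "\<lambda>x xa z. F (x + u0 y) (xa + u1 y) (z + u2 y)"] by simp
  qed
  also have "\<dots> = WW (card (insert a I)) F" using insert.hyps by simp
  finally show ?case .
qed

lemma WW_prod:
  "WW n (\<lambda>x y z. f0 x * f1 y * f2 z) = DD n (\<lambda>a b c. gg f0 a * gg f1 b * gg f2 c)"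
proof (induction n arbitrary: f0 f1 f2)
  case 0
  then show ?case by (simp add: DD_def gg_0)
next
  case (Suc n)
  show ?case
    apply (simp add: S3_eq pm_eq_iff)
    apply (simp add: u0_def u1_def u2_def pm_def sg_def Suc.IH)
    apply (simp add: DD_Suc gg_Suc ring_distribs DD_add)
    done
qed



lemma pairs_sum:
  fixes a :: "nat \<Rightarrow> real"
  shows "2 * (\<Sum>(i,j)\<in>{(i,j). 1 \<le> i \<and> i < j \<and> j \<le> n}. a i * a j)
         = (\<Sum>i=1..n. a i)^2 - (\<Sum>i=1..n. (a i)^2)"
proof (induction n)
  case 0
  have e: "{(i,j). 1 \<le> i \<and> i < j \<and> j \<le> (0::nat)} = {}" by auto
  show ?case unfolding e by simp
next
  case (Suc n)
  have fin: "finite {(i,j). 1 \<le> i \<and> i < j \<and> j \<le> m}" for m :: nat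
    by (rule finite_subset[of _ "{1..m} \<times> {1..m}"]) auto
  have split: "{(i,j). 1 \<le> i \<and> i < j \<and> j \<le> Suc n} =
      {(i,j). 1 \<le> i \<and> i < j \<and> j \<le> n} \<union> (\<lambda>i. (i, Suc n)) ` {1..n}"
    by auto
  have disj: "{(i,j). 1 \<le> i \<and> i < j \<and> j \<le> n} \<inter> (\<lambda>i. (i, Suc n)) ` {1..n} = {}"
    by auto
  have "(\<Sum>(i,j)\<in>{(i,j). 1 \<le> i \<and> i < j \<and> j \<le> Suc n}. a i * a j)
      = (\<Sum>(i,j)\<in>{(i,j). 1 \<le> i \<and> i < j \<and> j \<le> n}. a i * a j) + (\<Sum>i=1..n. a i * a (Suc n))"
    unfolding split
    by (subst sum.union_disjoint[OF fin _ disj]) (auto simp: sum.reindex inj_on_def)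
  then show ?case using Suc.IH
    by (simp add: power2_eq_square algebra_simps sum_distrib_left sum_distrib_right)
qed

lemma triple_sum:
  fixes n :: nat
  shows "(\<Sum>(a,b,c)\<in>{(a,b,c). a + b + c = n}. h a b c) = (\<Sum>a\<le>n. \<Sum>b\<le>n-a. h a b (n-a-b))"
proof -
  have e: "{(a,b,c). a + b + c = n} = (\<lambda>(a,b). (a,b,n-a-b)) ` (SIGMA a:{..n}. {..n-a})"
  proof (intro equalityI subsetI)
    fix x assume "x \<in> {(a,b,c). a + b + c = n}"
    then obtain a b c where x: "x = (a,b,c)" "a+b+c = n" by auto
    show "x \<in> (\<lambda>(a,b). (a,b,n-a-b)) ` (SIGMA a:{..n}. {..n-a})"
      by (rule image_eqI[where x="(a,b)"]) (use x in auto)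
  qed auto
  have i: "inj_on (\<lambda>(a,b). (a,b,n-a-b)) (SIGMA a:{..n}. {..n-a})"
    by (auto simp: inj_on_def)
  show ?thesis unfolding e sum.reindex[OF i]
    by (simp add: sum.Sigma case_prod_unfold)
qed

lemma multinom_eq: "a \<le> n \<Longrightarrow> b \<le> n - a \<Longrightarrow>
  multinom3 n a b (n-a-b) = real (n choose a) * real ((n-a) choose b)"
  unfolding multinom3_def
  by (simp add: binomial_fact field_simps)



lemma alg_mQ:
  fixes m Q \<beta> H X0 X1 X2 :: real
  assumes "m > 0" "Q > 0"
  shows "- \<beta> * (- (Q / m) * ((X0^2 + X1^2 + X2^2 - (m + 1)) / 2) - H * X0)
    = - (\<beta> / 2) * ((m + 1) * Q / m + H^2 * m / Q) + (X0 + H * m / Q)^2 * (\<beta> * Q / (2 * m))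
      + (X1 + 0)^2 * (\<beta> * Q / (2 * m)) + (X2 + 0)^2 * (\<beta> * Q / (2 * m))"
  using assms by (simp add: field_simps power2_eq_square)

lemma alg:
  fixes N q J \<beta> H X0 X1 X2 :: real
  assumes "N - 1 > 0" "q * J > 0"
  shows "- \<beta> * (- (q * J / (N - 1)) * ((X0^2 + X1^2 + X2^2 - N) / 2) - H * X0)
    = - (\<beta> / 2) * (N * q * J / (N - 1) + H^2 * (N - 1) / (q * J))
      + (X0 + H * (N - 1) / (q * J))^2 * (\<beta> * q * J / (2 * (N - 1)))
      + (X1 + 0)^2 * (\<beta> * q * J / (2 * (N - 1))) + (X2 + 0)^2 * (\<beta> * q * J / (2 * (N - 1)))"
proof -
  define m where "m = N - 1"
  define Q where "Q = q * J"
  have N: "N = m + 1" by (simp add: m_def)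
  have e1: "N * q * J = N * Q" by (simp add: Q_def mult.assoc)
  have e2: "\<beta> * q * J = \<beta> * Q" by (simp add: Q_def mult.assoc)
  have m0: "m > 0" "Q > 0" using assms by (auto simp: m_def Q_def)
  show ?thesis unfolding e1 e2 Q_def[symmetric] m_def[symmetric]
    unfolding N by (rule alg_mQ[OF m0])
qed

lemma multinom_eq': "a \<le> n \<Longrightarrow> b \<le> n - a \<Longrightarrow>
  multinom3 n a b (n - (a + b)) = real (n choose a) * real ((n-a) choose b)"
  using multinom_eq[of a n b] by simp

lemma pairs_sum3:
  fixes a b c :: "nat \<Rightarrow> real"
  shows "2 * (\<Sum>(i,j)\<in>{(i,j). 1 \<le> i \<and> i < j \<and> j \<le> n}. a i * a j + b i * b j + c i * c j)
         = (\<Sum>i=1..n. a i)^2 + (\<Sum>i=1..n. b i)^2 + (\<Sum>i=1..n. c i)^2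
           - (\<Sum>i=1..n. (a i)^2 + (b i)^2 + (c i)^2)"
proof -
  have "(\<Sum>(i,j)\<in>{(i,j). 1 \<le> i \<and> i < j \<and> j \<le> n}. a i * a j + b i * b j + c i * c j)
     = (\<Sum>(i,j)\<in>{(i,j). 1 \<le> i \<and> i < j \<and> j \<le> n}. a i * a j)
     + (\<Sum>(i,j)\<in>{(i,j). 1 \<le> i \<and> i < j \<and> j \<le> n}. b i * b j)
     + (\<Sum>(i,j)\<in>{(i,j). 1 \<le> i \<and> i < j \<and> j \<le> n}. c i * c j)"
    by (simp add: case_prod_unfold sum.distrib)
  then show ?thesis using pairs_sum[of a n] pairs_sum[of b n] pairs_sum[of c n]
    by (simp add: sum.distrib algebra_simps)
qed

lemma gg_G: "gg (\<lambda>y. x powr ((real_of_int y + l)^2)) m = G m l x"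
  unfolding gg_def G_def atLeast0AtMost[symmetric]
proof (rule sum.cong[OF refl])
  fix i assume "i \<in> {0..m}"
  hence "i \<le> m" by simp
  hence "real_of_int (int i - int (m - i)) = 2 * real i - real m" by (simp add: of_nat_diff)
  thus "real (m choose i) * x powr ((real_of_int (int i - int (m - i)) + l)^2)
      = real (m choose i) * x powr ((2 * real i - real m + l)^2)" by simp
qed

theorem theorem8:
  fixes n q :: nat and \<beta> J H :: real
  assumes "n \<ge> 2" and "q \<ge> 1" and "\<beta> > 0" and "J > 0"
  shows "Z n q J H \<beta> =
    exp (- (\<beta> / 2) * (real n * real q * J / (real n - 1) + H^2 * (real n - 1) / (real q * J)))
    * (\<Sum>(a,b,c) \<in> {(a,b,c). a + b + c = n}.
         multinom3 n a b c
         * G a (H * (real n - 1) / (real q * J)) (exp (\<beta> * real q * J / (2 * (real n - 1))))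
         * G b 0 (exp (\<beta> * real q * J / (2 * (real n - 1))))
         * G c 0 (exp (\<beta> * real q * J / (2 * (real n - 1)))))"
proof -
  define K where "K = \<beta> * real q * J / (2 * (real n - 1))"
  define l where "l = H * (real n - 1) / (real q * J)"
  define x where "x = exp K"
  define c0 where "c0 = - (\<beta> / 2) * (real n * real q * J / (real n - 1) + H^2 * (real n - 1) / (real q * J))"
  define f0 :: "int \<Rightarrow> real" where "f0 y = x powr ((real_of_int y + l)^2)" for y
  define f1 :: "int \<Rightarrow> real" where "f1 y = x powr ((real_of_int y + 0)^2)" for y
  have n1: "real n - 1 > 0" using assms(1) by simp
  have qJ: "real q * J > 0" using assms(2,4) by simp
  have xp: "x powr t = exp (t * K)" for t unfolding x_def powr_def by simp
  have key: "exp (- \<beta> * H_mean n q J H P) = exp c0 *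
      (f0 (\<Sum>i\<in>{1..n}. u0 (P i)) * f1 (\<Sum>i\<in>{1..n}. u1 (P i)) * f1 (\<Sum>i\<in>{1..n}. u2 (P i)))"
    if P: "P \<in> PiE {1..n} (\<lambda>_. S3)" for P
  proof -
    have PS: "P i \<in> S3" if "i \<in> {1..n}" for i using P that by auto
    define A0 where "A0 i = real_of_int (u0 (P i))" for i
    define A1 where "A1 i = real_of_int (u1 (P i))" for i
    define A2 where "A2 i = real_of_int (u2 (P i))" for i
    define X0 where "X0 = (\<Sum>i=1..n. A0 i)"
    define X1 where "X1 = (\<Sum>i=1..n. A1 i)"
    define X2 where "X2 = (\<Sum>i=1..n. A2 i)"
    have s1: "(\<Sum>(i,j)\<in>{(i,j). 1 \<le> i \<and> i < j \<and> j \<le> n}. phi (P i) (P j))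
        = (\<Sum>(i,j)\<in>{(i,j). 1 \<le> i \<and> i < j \<and> j \<le> n}. A0 i * A0 j + A1 i * A1 j + A2 i * A2 j)"
      by (rule sum.cong[OF refl]) (auto simp: phi_S3 PS A0_def A1_def A2_def)
    have s2: "(\<Sum>i=1..n. (A0 i)^2 + (A1 i)^2 + (A2 i)^2) = real n"
    proof -
      have "(\<Sum>i=1..n. (A0 i)^2 + (A1 i)^2 + (A2 i)^2) = (\<Sum>i=1..n. 1)"
      proof (rule sum.cong[OF refl])
        fix i assume i: "i \<in> {1..n}"
        have "real_of_int ((u0 (P i))^2 + (u1 (P i))^2 + (u2 (P i))^2) = 1"
          using u_sq[OF PS[OF i]] by simp
        thus "(A0 i)^2 + (A1 i)^2 + (A2 i)^2 = 1" unfolding A0_def A1_def A2_def by simp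
      qed
      thus ?thesis by simp
    qed
    have s3: "(\<Sum>i=1..n. phi (P i) id) = X0"
      unfolding X0_def A0_def by (rule sum.cong[OF refl]) (simp add: u_id PS)
    have Hm: "H_mean n q J H P = - (real q * J / (real n - 1)) * ((X0^2 + X1^2 + X2^2 - real n) / 2) - H * X0"
    proof -
      have e: "sum (case_prod (\<lambda>i j. phi (P i) (P j))) {(i,j). 1 \<le> i \<and> i < j \<and> j \<le> n} = (X0^2 + X1^2 + X2^2 - real n) / 2"
        using s1 using pairs_sum3[of A0 A1 A2 n] s2 unfolding X0_def X1_def X2_def by (simp add: field_simps)
      show ?thesis unfolding H_mean_def s3 e by simp
    qed
    have ex: "- \<beta> * H_mean n q J H P = c0 + (X0 + l)^2 * K + (X1 + 0)^2 * K + (X2 + 0)^2 * K"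
      unfolding Hm c0_def K_def l_def by (rule alg[OF n1 qJ])
    have f: "f0 (\<Sum>i\<in>{1..n}. u0 (P i)) = exp ((X0 + l)^2 * K)"
            "f1 (\<Sum>i\<in>{1..n}. u1 (P i)) = exp ((X1 + 0)^2 * K)"
            "f1 (\<Sum>i\<in>{1..n}. u2 (P i)) = exp ((X2 + 0)^2 * K)"
      unfolding f0_def f1_def xp X0_def X1_def X2_def A0_def A1_def A2_def by simp_all
    show ?thesis unfolding f ex by (simp add: exp_add)
  qed
  have "Z n q J H \<beta> = (\<Sum>P\<in>PiE {1..n} (\<lambda>_. S3). exp c0 *
      (f0 (\<Sum>i\<in>{1..n}. u0 (P i)) * f1 (\<Sum>i\<in>{1..n}. u1 (P i)) * f1 (\<Sum>i\<in>{1..n}. u2 (P i))))"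
    unfolding Z_def by (rule sum.cong[OF refl]) (rule key)
  also have "\<dots> = exp c0 * WW n (\<lambda>x y z. f0 x * f1 y * f1 z)"
    unfolding sum_distrib_left[symmetric]
    using WW_PiE[of "{1..n}" "\<lambda>x y z. f0 x * f1 y * f1 z"] by simp
  also have "\<dots> = exp c0 * DD n (\<lambda>a b c. G a l x * G b 0 x * G c 0 x)"
    unfolding WW_prod f0_def f1_def gg_G ..
  also have "\<dots> = exp c0 * (\<Sum>(a,b,c) \<in> {(a,b,c). a + b + c = n}. multinom3 n a b c * G a l x * G b 0 x * G c 0 x)"
    unfolding triple_sum DD_def
    by (auto simp: multinom_eq multinom_eq' sum_distrib_left mult.assoc intro!: sum.cong)
  finally show ?thesis unfolding c0_def l_def x_def K_def .
qed

end
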